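(* Let $\zeta\in\mathbb{C}$, $m\ge1$, and let $H_{2m}(w_1,\ldots,w_{2m})$ be the rational function \[ H_{2m}(w_1,\ldots,w_{2m})=\frac{\prod_{i=1}^m\prod_{j=m+1}^{2m}h(w_i,w_j)}{\prod_{1\le i<j\le m}(w_i-w_j)\prod_{m+1\le i<j\le 2m}(w_i-w_j)}\ \det_{1\le i\le m,\ m+1\le j\le 2m}\frac{1}{h(w_i,w_j)}, \] where $h(w,w')=1-(3+\zeta^2)ww'+(1-\zeta^2)ww'(w+w')$. Then $H_{2m}$ is a symmetric function of all $2m$ variables $w_1,\ldots,w_{2m}$ (not only separately symmetric in $\{w_1,\ldots,w_m\}$ and in $\{w_{m+1},\ldots,w_{2m}\}$).
   Context: The determinant is of the $m\times m$ matrix with rows $i=1,\ldots,m$ and columns $j=m+1,\ldots,2m$. *)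

theory Defs
  imports "Jordan_Normal_Form.Determinant" "HOL-Combinatorics.Permutations"
begin

definition hfun :: "complex \<Rightarrow> complex \<Rightarrow> complex \<Rightarrow> complex" where
  "hfun \<zeta> w w' = 1 - (3 + \<zeta>^2) * w * w' + (1 - \<zeta>^2) * w * w' * (w + w')"

text \<open>The determinant is of the m x m matrix with rows i = 1..m and columns j = m+1..2m
  (shifted to 0-based matrix indices).\<close>
definition Hfun :: "complex \<Rightarrow> nat \<Rightarrow> (nat \<Rightarrow> complex) \<Rightarrow> complex" where
  "Hfun \<zeta> m w =
     (\<Prod>i\<in>{1..m}. \<Prod>j\<in>{m+1..2*m}. hfun \<zeta> (w i) (w j))
     / ((\<Prod>i\<in>{1..m}. \<Prod>j\<in>{i+1..m}. (w i - w j))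
        * (\<Prod>i\<in>{m+1..2*m}. \<Prod>j\<in>{i+1..2*m}. (w i - w j)))
     * det (mat m m (\<lambda>(i, j). 1 / hfun \<zeta> (w (i + 1)) (w (m + j + 1))))"

definition H_defined :: "complex \<Rightarrow> nat \<Rightarrow> (nat \<Rightarrow> complex) \<Rightarrow> bool" where
  "H_defined \<zeta> m w \<longleftrightarrow>
     (\<forall>i\<in>{1..m}. \<forall>j\<in>{m+1..2*m}. hfun \<zeta> (w i) (w j) \<noteq> 0) \<and>
     (\<forall>i\<in>{1..m}. \<forall>j\<in>{1..m}. i \<noteq> j \<longrightarrow> w i \<noteq> w j) \<and>
     (\<forall>i\<in>{m+1..2*m}. \<forall>j\<in>{m+1..2*m}. i \<noteq> j \<longrightarrow> w i \<noteq> w j)"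

end

theory Submission
  imports Defs
begin


lemma det_scale:
  fixes A :: "nat \<Rightarrow> nat \<Rightarrow> 'a::comm_ring_1"
  shows "det (mat n n (\<lambda>(i,j). f i * g j * A i j)) =
    (\<Prod>i\<in>{0..<n}. f i) * (\<Prod>j\<in>{0..<n}. g j) * det (mat n n (\<lambda>(i,j). A i j))"
proof -
  have "det (mat n n (\<lambda>(i,j). f i * g j * A i j)) =
     (\<Sum>p\<in>{p. p permutes {0..<n}}. signof p * (\<Prod>i\<in>{0..<n}. f i * g (p i) * A i (p i)))"
    by (subst det_def'[of _ n]) auto
  also have "\<dots> = (\<Sum>p\<in>{p. p permutes {0..<n}}. (\<Prod>i\<in>{0..<n}. f i) * (\<Prod>j\<in>{0..<n}. g j) *
       (signof p * (\<Prod>i\<in>{0..<n}. A i (p i))))"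
  proof (rule sum.cong[OF refl])
    fix p assume "p \<in> {p. p permutes {0..<n}}"
    hence p: "p permutes {0..<n}" by simp
    have "(\<Prod>i\<in>{0..<n}. g (p i)) = (\<Prod>j\<in>{0..<n}. g j)"
      using prod.permute[OF p, of g] by (simp add: comp_def)
    thus "signof p * (\<Prod>i\<in>{0..<n}. f i * g (p i) * A i (p i)) =
       (\<Prod>i\<in>{0..<n}. f i) * (\<Prod>j\<in>{0..<n}. g j) * (signof p * (\<Prod>i\<in>{0..<n}. A i (p i)))"
      by (simp add: prod.distrib algebra_simps)
  qed
  also have "\<dots> = (\<Prod>i\<in>{0..<n}. f i) * (\<Prod>j\<in>{0..<n}. g j) * det (mat n n (\<lambda>(i,j). A i j))"
    by (subst det_def'[of _ n]) (auto simp: sum_distrib_left)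
  finally show ?thesis .
qed

lemma det_permute_cols:
  assumes A: "A \<in> carrier_mat n n" and p: "p permutes {0..<n}"
  shows "det (mat n n (\<lambda>(i,j). A $$ (i, p j))) = signof p * det A"
proof -
  have AT: "A\<^sup>T \<in> carrier_mat n n" using A by simp
  have "mat n n (\<lambda>(i,j). A $$ (i, p j)) = (mat n n (\<lambda>(i,j). A\<^sup>T $$ (p i, j)))\<^sup>T"
    using A permutes_in_image[OF p] by (intro eq_matI) auto
  hence "det (mat n n (\<lambda>(i,j). A $$ (i, p j))) = det (mat n n (\<lambda>(i,j). A\<^sup>T $$ (p i, j)))"
    by (metis (no_types, lifting) det_transpose carrier_matI dim_col_mat(1) dim_row_mat(1))
  also have "\<dots> = signof p * det A\<^sup>T" by (rule det_permute_rows[OF AT p])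
  finally show ?thesis using det_transpose[OF A] by simp
qed

definition vdm :: "nat \<Rightarrow> (nat \<Rightarrow> 'a::comm_ring_1) \<Rightarrow> 'a mat" where
  "vdm n u = mat n n (\<lambda>(i,j). u j ^ i)"

lemma det_vdm:
  fixes u :: "nat \<Rightarrow> 'a::idom"
  shows "det (vdm n u) = (\<Prod>j\<in>{0..<n}. \<Prod>i\<in>{0..<j}. (u j - u i))"
proof (induction n arbitrary: u)
  case 0
  then show ?case by (simp add: vdm_def)
next
  case (Suc n)
  define L0 :: "'a mat" where "L0 = mat (Suc n) (Suc n) (\<lambda>(i,j). if i = j then 1 else if i = Suc j then - u 0 else 0)"
  define W where "W = mat (Suc n) (Suc n) (\<lambda>(i,j). if i = 0 then 1 else (u j - u 0) * u j ^ (i - 1))"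
  define W' where "W' = mat n n (\<lambda>(i,j). (u (Suc j) - u 0) * u (Suc j) ^ i)"
  have L0c: "L0 \<in> carrier_mat (Suc n) (Suc n)" by (simp add: L0_def)
  have Vc: "vdm (Suc n) u \<in> carrier_mat (Suc n) (Suc n)" by (simp add: vdm_def)
  have detL0: "det L0 = 1"
  proof -
    have "det L0 = prod_list (diag_mat L0)"
      by (rule det_lower_triangular[OF _ L0c]) (auto simp: L0_def)
    also have "diag_mat L0 = map (\<lambda>i. 1) [0..<Suc n]"
      unfolding diag_mat_def L0_def by (rule map_cong) auto
    finally show ?thesis by (simp add: map_replicate_const)
  qed
  have prod: "L0 * vdm (Suc n) u = W"
  proof (rule eq_matI)
    fix i j assume i: "i < dim_row W" and j: "j < dim_col W"
    hence i': "i < Suc n" and j': "j < Suc n" by (auto simp: W_def)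
    have "(L0 * vdm (Suc n) u) $$ (i,j) = (\<Sum>k\<in>{0..<Suc n}. L0 $$ (i,k) * u j ^ k)"
      using i' j' by (simp add: L0_def vdm_def scalar_prod_def)
    also have "\<dots> = (\<Sum>k\<in>{0..<Suc n}. (if k = i then u j ^ k else 0) + (if Suc k = i then - u 0 * u j ^ k else 0))"
      by (rule sum.cong) (use i' in \<open>auto simp: L0_def\<close>)
    also have "\<dots> = u j ^ i + (if i = 0 then 0 else - u 0 * u j ^ (i - 1))"
      using i' by (cases i) (auto simp: sum.distrib)
    also have "\<dots> = W $$ (i,j)"
      using i' j' by (cases i) (auto simp: W_def algebra_simps)
    finally show "(L0 * vdm (Suc n) u) $$ (i,j) = W $$ (i,j)" .
  qed (auto simp: W_def L0_def vdm_def)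
  have Wblock: "W = four_block_mat (mat 1 1 (\<lambda>_. 1)) (mat 1 n (\<lambda>_. 1)) (0\<^sub>m n 1) W'"
    by (rule eq_matI) (auto simp: W_def W'_def four_block_mat_def)
  have "det W = det (mat 1 1 (\<lambda>_. 1)) * det W'"
    unfolding Wblock by (rule det_four_block_mat_lower_left_zero) (auto simp: W'_def)
  also have "det (mat 1 1 (\<lambda>_. (1::'a))) = 1"
    by (subst det_single) auto
  also have "det W' = (\<Prod>j\<in>{0..<n}. (u (Suc j) - u 0)) * det (vdm n (u \<circ> Suc))"
    using det_scale[where f="\<lambda>_. 1" and g="\<lambda>j. u (Suc j) - u 0" and A="\<lambda>i j. u (Suc j) ^ i" and n=n]
    by (simp add: W'_def vdm_def)
  finally have "det W = (\<Prod>j\<in>{0..<n}. (u (Suc j) - u 0)) * det (vdm n (u \<circ> Suc))" by simp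
  moreover have "det W = det (vdm (Suc n) u)"
    using det_mult[OF L0c Vc] prod detL0 by simp
  ultimately have "det (vdm (Suc n) u) = (\<Prod>j\<in>{0..<n}. (u (Suc j) - u 0)) *
     (\<Prod>j\<in>{0..<n}. \<Prod>i\<in>{0..<j}. (u (Suc j) - u (Suc i)))"
    using Suc.IH[of "u \<circ> Suc"] by simp
  also have "\<dots> = (\<Prod>j\<in>{0..<n}. \<Prod>i\<in>{0..<Suc j}. (u (Suc j) - u i))"
    by (simp only: prod.atLeast0_lessThan_Suc_shift prod.distrib comp_def)
  also have "\<dots> = (\<Prod>j\<in>{0..<Suc n}. \<Prod>i\<in>{0..<j}. (u j - u i))"
    by (simp only: prod.atLeast0_lessThan_Suc_shift[of "\<lambda>j. \<Prod>i\<in>{0..<j}. (u j - u i)"]) (simp add: comp_def)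
  finally show ?case .
qed



lemma prod_tri_swap:
  "(\<Prod>j\<in>{0..<n}. \<Prod>k\<in>{Suc j..<n}. f j k) = (\<Prod>k\<in>{0..<n}. \<Prod>j\<in>{0..<k}. f j k)"
proof -
  have "(\<Prod>j\<in>{0..<n}. \<Prod>k\<in>{Suc j..<n}. f j k) = (\<Prod>(j,k)\<in>Sigma {0..<n} (\<lambda>j. {Suc j..<n}). f j k)"
    by (rule prod.Sigma) auto
  also have "\<dots> = (\<Prod>(k,j)\<in>Sigma {0..<n} (\<lambda>k. {0..<k}). f j k)"
    by (rule prod.reindex_bij_witness[where i="\<lambda>(k,j). (j,k)" and j="\<lambda>(j,k). (k,j)"]) auto
  also have "\<dots> = (\<Prod>k\<in>{0..<n}. \<Prod>j\<in>{0..<k}. f j k)"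
    by (rule prod.Sigma[symmetric]) auto
  finally show ?thesis .
qed

definition sgnc :: "nat \<Rightarrow> 'a::comm_ring_1" where
  "sgnc n = (\<Prod>j\<in>{0..<n}. \<Prod>i\<in>{0..<j}. (-1))"

definition Vd :: "nat \<Rightarrow> (nat \<Rightarrow> 'a::comm_ring_1) \<Rightarrow> 'a" where
  "Vd n u = (\<Prod>j\<in>{0..<n}. \<Prod>i\<in>{0..<j}. (u j - u i))"

lemma sgnc_sq: "sgnc n * sgnc n = (1::'a::comm_ring_1)"
  unfolding sgnc_def prod.distrib[symmetric] by simp

lemma prod_ne_sq:
  fixes u :: "nat \<Rightarrow> 'a::comm_ring_1"
  shows "(\<Prod>j\<in>{0..<n}. \<Prod>k\<in>{0..<n}-{j}. (u j - u k)) = sgnc n * (Vd n u * Vd n u)"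
proof -
  have split: "\<And>j. j < n \<Longrightarrow> (\<Prod>k\<in>{0..<n}-{j}. (u j - u k)) =
     (\<Prod>k\<in>{0..<j}. (u j - u k)) * (\<Prod>k\<in>{Suc j..<n}. (u j - u k))"
  proof -
    fix j assume j: "j < n"
    have "{0..<n}-{j} = {0..<j} \<union> {Suc j..<n}" using j by auto
    thus "(\<Prod>k\<in>{0..<n}-{j}. (u j - u k)) =
     (\<Prod>k\<in>{0..<j}. (u j - u k)) * (\<Prod>k\<in>{Suc j..<n}. (u j - u k))"
      by (simp add: prod.union_disjoint)
  qed
  have "(\<Prod>j\<in>{0..<n}. \<Prod>k\<in>{0..<n}-{j}. (u j - u k)) =
      (\<Prod>j\<in>{0..<n}. (\<Prod>k\<in>{0..<j}. (u j - u k)) * (\<Prod>k\<in>{Suc j..<n}. (u j - u k)))"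
    by (rule prod.cong) (auto simp: split)
  also have "\<dots> = Vd n u * (\<Prod>j\<in>{0..<n}. \<Prod>k\<in>{Suc j..<n}. (u j - u k))"
    by (simp add: prod.distrib Vd_def)
  also have "(\<Prod>j\<in>{0..<n}. \<Prod>k\<in>{Suc j..<n}. (u j - u k)) = (\<Prod>k\<in>{0..<n}. \<Prod>j\<in>{0..<k}. (u j - u k))"
    by (rule prod_tri_swap)
  also have "\<dots> = (\<Prod>k\<in>{0..<n}. \<Prod>j\<in>{0..<k}. (-1) * (u k - u j))"
    by (intro prod.cong refl) (simp add: algebra_simps)
  also have "\<dots> = sgnc n * Vd n u"
    unfolding sgnc_def Vd_def prod.distrib ..
  finally show ?thesis by (simp add: algebra_simps)
qed

lemma Vd_nz:
  fixes u :: "nat \<Rightarrow> 'a::idom"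
  assumes "\<And>i j. i < n \<Longrightarrow> j < n \<Longrightarrow> i \<noteq> j \<Longrightarrow> u i \<noteq> u j"
  shows "Vd n u \<noteq> 0"
  unfolding Vd_def using assms by (auto simp: prod_zero_iff)

lemma poly_sum_lt:
  fixes p :: "'a::comm_ring_1 poly"
  assumes "degree p < n"
  shows "(\<Sum>s\<in>{0..<n}. coeff p s * x ^ s) = poly p x"
proof -
  have "poly p x = (\<Sum>s\<le>degree p. coeff p s * x ^ s)" by (rule poly_altdef)
  also have "\<dots> = (\<Sum>s\<in>{0..<n}. coeff p s * x ^ s)"
    by (rule sum.mono_neutral_left) (use assms in \<open>auto simp: coeff_eq_0\<close>)
  finally show ?thesis by simp
qed



definition Pp :: "nat \<Rightarrow> (nat \<Rightarrow> 'a::comm_ring_1) \<Rightarrow> nat \<Rightarrow> 'a poly" where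
  "Pp n u j = (\<Prod>k\<in>{0..<n}-{j}. [:- u k, 1:])"

lemma poly_Pp: "poly (Pp n u j) z = (\<Prod>k\<in>{0..<n}-{j}. (z - u k))"
  by (simp add: Pp_def poly_prod)

lemma degree_Pp:
  fixes u :: "nat \<Rightarrow> 'a::comm_ring_1"
  assumes "j < n" shows "degree (Pp n u j) < n"
proof -
  have "degree (Pp n u j) \<le> sum (degree \<circ> (\<lambda>k. [:- u k, 1:])) ({0..<n}-{j})"
    unfolding Pp_def by (rule degree_prod_sum_le) auto
  also have "\<dots> \<le> sum (\<lambda>k. 1) ({0..<n}-{j})"
    by (rule sum_mono) auto
  also have "\<dots> = n - 1" using assms by simp
  finally show ?thesis using assms by simp
qed

lemma Pp_sum:
  fixes u :: "nat \<Rightarrow> 'a::comm_ring_1"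
  assumes "j < n"
  shows "(\<Sum>s\<in>{0..<n}. coeff (Pp n u j) s * z ^ s) = (\<Prod>k\<in>{0..<n}-{j}. (z - u k))"
  using poly_sum_lt[OF degree_Pp[OF assms]] poly_Pp by metis

lemma mat_prod_entry:
  assumes "i < n" "j < n"
  shows "(mat n n a * mat n n b) $$ (i,j) = (\<Sum>s\<in>{0..<n}. a (i,s) * b (s,j))"
  using assms by (simp add: scalar_prod_def)

lemma Pp_sum2:
  fixes u :: "nat \<Rightarrow> 'a::comm_ring_1"
  assumes "j < n"
  shows "(\<Sum>s\<in>{0..<n}. - (y * coeff (Pp n u j) s * z ^ s)) + (\<Sum>s\<in>{0..<n}. coeff (Pp n u j) s * (a * z ^ s))
     = (a - y) * (\<Prod>k\<in>{0..<n}-{j}. (z - u k))"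
proof -
  have 1: "(\<Sum>s\<in>{0..<n}. - (y * coeff (Pp n u j) s * z ^ s)) = - y * (\<Sum>s\<in>{0..<n}. coeff (Pp n u j) s * z ^ s)"
    by (simp add: sum_distrib_left mult.assoc sum_negf)
  have 2: "(\<Sum>s\<in>{0..<n}. coeff (Pp n u j) s * (a * z ^ s)) = a * (\<Sum>s\<in>{0..<n}. coeff (Pp n u j) s * z ^ s)"
    by (simp add: sum_distrib_left mult.left_commute)
  show ?thesis unfolding 1 2 Pp_sum[OF assms] by (simp add: algebra_simps)
qed

definition NN :: "nat \<Rightarrow> (nat \<Rightarrow> 'a::comm_ring_1) \<Rightarrow> (nat \<Rightarrow> 'a) \<Rightarrow> (nat \<Rightarrow> 'a) \<Rightarrow> (nat \<Rightarrow> 'a) \<Rightarrow> 'a mat" where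
  "NN n t u x y = mat (n+n) (n+n) (\<lambda>(r,c). if c < n then (if r < n then u c ^ r else y c * u c ^ (r - n))
      else (if r < n then t (c - n) ^ r else x (c - n) * t (c - n) ^ (r - n)))"

lemma core:
  fixes t u x y :: "nat \<Rightarrow> 'a::idom"
  assumes dist: "\<And>i j. i < n \<Longrightarrow> j < n \<Longrightarrow> i \<noteq> j \<Longrightarrow> u i \<noteq> u j"
  shows "det (NN n t u x y) = sgnc n * det (mat n n (\<lambda>(i,j). (x i - y j) * (\<Prod>k\<in>{0..<n}-{j}. (t i - u k))))"
proof -
  define P where "P j z = (\<Prod>k\<in>{0..<n}-{j}. (z - u k))" for j z
  define K where "K = mat n n (\<lambda>(j,s). coeff (Pp n u j) s)"
  define K2 where "K2 = mat n n (\<lambda>(j,s). - y j * coeff (Pp n u j) s)"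
  define VY where "VY = mat n n (\<lambda>(r,c). u c ^ r)"
  define VX where "VX = mat n n (\<lambda>(r,c). t c ^ r)"
  define VY' where "VY' = mat n n (\<lambda>(r,c). y c * u c ^ r)"
  define VX' where "VX' = mat n n (\<lambda>(r,c). x c * t c ^ r)"
  define Dg where "Dg = mat n n (\<lambda>(j,c). if j = c then P j (u j) else 0)"
  define Q where "Q = mat n n (\<lambda>(j,c). P j (t c))"
  define ET where "ET = mat n n (\<lambda>(j,c). (x c - y j) * P j (t c))"
  define L where "L = four_block_mat K (0\<^sub>m n n) K2 K"
  note defs = K_def K2_def VY_def VX_def VY'_def VX'_def Dg_def Q_def ET_def
  have c: "K \<in> carrier_mat n n" "K2 \<in> carrier_mat n n" "VY \<in> carrier_mat n n" "VX \<in> carrier_mat n n"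
    "VY' \<in> carrier_mat n n" "VX' \<in> carrier_mat n n" "Dg \<in> carrier_mat n n" "Q \<in> carrier_mat n n"
    "ET \<in> carrier_mat n n" by (auto simp: defs)
  have Pz: "P j (u c) = 0" if "j < n" "c < n" "j \<noteq> c" for j c
    unfolding P_def using that by (auto simp: prod_zero_iff)
  have NNb: "NN n t u x y = four_block_mat VY VX VY' VX'"
    by (rule eq_matI) (auto simp: NN_def four_block_mat_def defs)
  have KVY: "K * VY = Dg"
  proof (rule eq_matI)
    fix j c assume "j < dim_row Dg" "c < dim_col Dg"
    hence jc: "j < n" "c < n" by (auto simp: Dg_def)
    have "(K * VY) $$ (j,c) = P j (u c)"
      using jc by (simp del: index_mult_mat add: index_mult_mat(2,3) K_def VY_def mat_prod_entry Pp_sum P_def)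
    thus "(K * VY) $$ (j,c) = Dg $$ (j,c)" using jc Pz by (auto simp: Dg_def)
  qed (auto simp: defs)
  have KVX: "K * VX = Q"
  proof (rule eq_matI)
    fix j c assume "j < dim_row Q" "c < dim_col Q"
    hence jc: "j < n" "c < n" by (auto simp: Q_def)
    show "(K * VX) $$ (j,c) = Q $$ (j,c)"
      using jc by (simp del: index_mult_mat add: index_mult_mat(2,3) K_def VX_def Q_def mat_prod_entry Pp_sum P_def)
  qed (auto simp: defs)
  have LY: "K2 * VY + K * VY' = 0\<^sub>m n n"
  proof (rule eq_matI)
    fix j c assume "j < dim_row (0\<^sub>m n n :: 'a mat)" "c < dim_col (0\<^sub>m n n :: 'a mat)"
    hence jc: "j < n" "c < n" by auto
    have "(K2 * VY + K * VY') $$ (j,c) = (\<Sum>s\<in>{0..<n}. - (y j * coeff (Pp n u j) s * u c ^ s))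
       + (\<Sum>s\<in>{0..<n}. coeff (Pp n u j) s * (y c * u c ^ s))"
      using jc by (subst index_add_mat) (simp_all del: index_mult_mat add: index_mult_mat(2,3) K_def K2_def VY_def VY'_def mat_prod_entry)
    also have "\<dots> = (y c - y j) * P j (u c)"
      using jc by (simp only: Pp_sum2 P_def)
    also have "\<dots> = 0" using Pz[of j c] jc by (cases "j = c") auto
    finally show "(K2 * VY + K * VY') $$ (j,c) = 0\<^sub>m n n $$ (j,c)" using jc by simp
  qed (auto simp: defs)
  have LX: "K2 * VX + K * VX' = ET"
  proof (rule eq_matI)
    fix j c assume "j < dim_row ET" "c < dim_col ET"
    hence jc: "j < n" "c < n" by (auto simp: ET_def)
    have "(K2 * VX + K * VX') $$ (j,c) = (\<Sum>s\<in>{0..<n}. - (y j * coeff (Pp n u j) s * t c ^ s))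
       + (\<Sum>s\<in>{0..<n}. coeff (Pp n u j) s * (x c * t c ^ s))"
      using jc by (subst index_add_mat) (simp_all del: index_mult_mat add: index_mult_mat(2,3) K_def K2_def VX_def VX'_def mat_prod_entry)
    also have "\<dots> = (x c - y j) * P j (t c)"
      using jc by (simp only: Pp_sum2 P_def)
    finally show "(K2 * VX + K * VX') $$ (j,c) = ET $$ (j,c)" using jc by (simp add: ET_def)
  qed (auto simp: defs)
  have LN: "L * NN n t u x y = four_block_mat Dg Q (0\<^sub>m n n) ET"
    unfolding L_def NNb
    by (subst mult_four_block_mat[OF c(1) zero_carrier_mat c(2) c(1) c(3) c(4) c(5) c(6)])
      (use c KVY KVX LY LX in simp)
  have detL: "det L = det K * det K"
    unfolding L_def by (rule det_four_block_mat_upper_right_zero[OF c(1) refl c(2) c(1)])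
  have detU: "det (four_block_mat Dg Q (0\<^sub>m n n) ET) = det Dg * det ET"
    by (rule det_four_block_mat_lower_left_zero[OF c(7) c(8) refl c(9)])
  have detDg: "det Dg = (\<Prod>j\<in>{0..<n}. P j (u j))"
  proof -
    have "det Dg = prod_list (diag_mat Dg)"
      by (rule det_upper_triangular[OF _ c(7)]) (auto simp: Dg_def)
    also have "diag_mat Dg = map (\<lambda>j. P j (u j)) [0..<n]"
      unfolding diag_mat_def Dg_def by (rule map_cong) auto
    finally show ?thesis by (simp add: prod.distinct_set_conv_list[of "[0..<n]", symmetric])
  qed
  have NNc: "NN n t u x y \<in> carrier_mat (n+n) (n+n)" by (simp add: NN_def)
  have Lc: "L \<in> carrier_mat (n+n) (n+n)" unfolding L_def using c by simp
  have eq1: "det K * det K * det (NN n t u x y) = det Dg * det ET"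
    using det_mult[OF Lc NNc] LN detL detU by simp
  have VYv: "VY = vdm n u" by (simp add: VY_def vdm_def)
  have eq2: "det K * Vd n u = det Dg"
    using det_mult[OF c(1) c(3)] KVY det_vdm[where n=n and u=u] VYv by (simp add: Vd_def)
  have eq3: "det Dg = sgnc n * (Vd n u * Vd n u)"
    using detDg prod_ne_sq[where n=n and u=u] by (simp add: P_def)
  have Vnz: "Vd n u \<noteq> 0" by (rule Vd_nz) (use dist in auto)
  have dK: "det K = sgnc n * Vd n u"
    using eq2 eq3 Vnz by (metis mult.assoc mult.commute mult_cancel_left)
  have "Vd n u * Vd n u * det (NN n t u x y) = Vd n u * Vd n u * (sgnc n * det ET)"
    using eq1 unfolding dK eq3
    by (metis (no_types, lifting) mult.assoc mult.commute mult.left_commute sgnc_sq mult_1)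
  hence "det (NN n t u x y) = sgnc n * det ET" using Vnz by simp
  moreover have "ET = (mat n n (\<lambda>(i,j). (x i - y j) * (\<Prod>k\<in>{0..<n}-{j}. (t i - u k))))\<^sup>T"
    by (rule eq_matI) (auto simp: ET_def P_def)
  ultimately show ?thesis by (simp add: det_transpose[of _ n])
qed



definition Bf :: "complex \<Rightarrow> complex \<Rightarrow> complex" where
  "Bf \<zeta> a = 1 + (3 + \<zeta>^2) * a^2 - (1 - \<zeta>^2) * a^3"

definition Tf :: "complex \<Rightarrow> complex \<Rightarrow> complex" where
  "Tf \<zeta> a = Bf \<zeta> a / a"

lemma h_T:
  assumes "a \<noteq> 0" "b \<noteq> 0"
  shows "(a - b) * hfun \<zeta> a b = a * b * (Tf \<zeta> b - Tf \<zeta> a)"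
  using assms by (simp add: hfun_def Tf_def Bf_def field_simps power2_eq_square power3_eq_cube)

definition Gen :: "complex \<Rightarrow> nat \<Rightarrow> (nat \<Rightarrow> complex) \<Rightarrow> bool" where
  "Gen \<zeta> n z \<longleftrightarrow> (\<forall>k<n+n. z k \<noteq> 0) \<and>
     (\<forall>i<n+n. \<forall>j<n+n. i \<noteq> j \<longrightarrow> z i \<noteq> z j \<and> Tf \<zeta> (z i) \<noteq> Tf \<zeta> (z j))"

definition Hz :: "complex \<Rightarrow> nat \<Rightarrow> (nat \<Rightarrow> complex) \<Rightarrow> complex" where
  "Hz \<zeta> n z = (\<Prod>i\<in>{0..<n}. \<Prod>j\<in>{0..<n}. hfun \<zeta> (z i) (z (n+j))) /
     ((\<Prod>i\<in>{0..<n}. \<Prod>j\<in>{Suc i..<n}. (z i - z j)) * (\<Prod>i\<in>{0..<n}. \<Prod>j\<in>{Suc i..<n}. (z (n+i) - z (n+j))))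
     * det (mat n n (\<lambda>(i,j). 1 / hfun \<zeta> (z i) (z (n+j))))"

definition N2 :: "complex \<Rightarrow> nat \<Rightarrow> (nat \<Rightarrow> complex) \<Rightarrow> complex mat" where
  "N2 \<zeta> n z = mat (n+n) (n+n) (\<lambda>(r,c). if r < n then Tf \<zeta> (z c) ^ r else z c * Tf \<zeta> (z c) ^ (r - n))"

lemma Vd_split:
  "Vd (n+n) z = Vd n z * (\<Prod>j\<in>{0..<n}. \<Prod>i\<in>{0..<n}. (z (n+j) - z i)) * Vd n (\<lambda>j. z (n+j))"
proof -
  have inner: "(\<Prod>i\<in>{0..<n+j}. (z (n+j) - z i)) = (\<Prod>i\<in>{0..<n}. (z (n+j) - z i)) * (\<Prod>i\<in>{0..<j}. (z (n+j) - z (n+i)))" for j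
  proof -
    have "(\<Prod>i\<in>{0..<n+j}. (z (n+j) - z i)) = (\<Prod>i\<in>{0..<n}. (z (n+j) - z i)) * (\<Prod>i\<in>{n..<n+j}. (z (n+j) - z i))"
      by (rule prod.atLeastLessThan_concat[symmetric]) auto
    also have "(\<Prod>i\<in>{n..<n+j}. (z (n+j) - z i)) = (\<Prod>i\<in>{0..<j}. (z (n+j) - z (n+i)))"
      using prod.shift_bounds_nat_ivl[of "\<lambda>i. z (n+j) - z i" 0 n j] by (simp add: add.commute)
    finally show ?thesis .
  qed
  have "Vd (n+n) z = (\<Prod>j\<in>{0..<n}. \<Prod>i\<in>{0..<j}. (z j - z i)) * (\<Prod>j\<in>{n..<n+n}. \<Prod>i\<in>{0..<j}. (z j - z i))"
    unfolding Vd_def by (rule prod.atLeastLessThan_concat[symmetric]) auto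
  also have "(\<Prod>j\<in>{n..<n+n}. \<Prod>i\<in>{0..<j}. (z j - z i)) = (\<Prod>j\<in>{0..<n}. \<Prod>i\<in>{0..<n+j}. (z (n+j) - z i))"
    using prod.shift_bounds_nat_ivl[of "\<lambda>j. \<Prod>i\<in>{0..<j}. (z j - z i)" 0 n n] by (simp add: add.commute)
  also have "\<dots> = (\<Prod>j\<in>{0..<n}. \<Prod>i\<in>{0..<n}. (z (n+j) - z i)) * Vd n (\<lambda>j. z (n+j))"
    unfolding inner prod.distrib Vd_def ..
  finally show ?thesis by (simp add: Vd_def mult.assoc)
qed

lemma DX_Vd:
  "(\<Prod>i\<in>{0..<n}. \<Prod>j\<in>{Suc i..<n}. (x i - x j)) = sgnc n * Vd n x"
proof -
  have "(\<Prod>i\<in>{0..<n}. \<Prod>j\<in>{Suc i..<n}. (x i - x j)) = (\<Prod>j\<in>{0..<n}. \<Prod>i\<in>{0..<j}. (x i - x j))"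
    by (rule prod_tri_swap)
  also have "\<dots> = (\<Prod>j\<in>{0..<n}. \<Prod>i\<in>{0..<j}. (-1) * (x j - x i))"
    by (intro prod.cong refl) (simp add: algebra_simps)
  also have "\<dots> = sgnc n * Vd n x"
    unfolding sgnc_def Vd_def prod.distrib ..
  finally show ?thesis .
qed

lemma main_gen:
  assumes n1: "n \<ge> 1" and G: "Gen \<zeta> n z"
  shows "Hz \<zeta> n z * det (vdm (n+n) z) =
    (-1)^n * (-1)^(n*n) * sgnc n * (\<Prod>k\<in>{0..<n+n}. z k ^ (n-1)) * det (N2 \<zeta> n z)"
proof -
  define x where "x i = z i" for i
  define y where "y j = z (n+j)" for j
  define t where "t i = Tf \<zeta> (z i)" for i
  define u where "u j = Tf \<zeta> (z (n+j))" for j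
  define E where "E = mat n n (\<lambda>(i,j). (x i - y j) * (\<Prod>k\<in>{0..<n}-{j}. (t i - u k)))"
  define F where "F i = (\<Prod>k\<in>{0..<n}. (t i - u k))" for i
  have xnz: "x i \<noteq> 0" if "i < n" for i using G that by (auto simp: Gen_def x_def)
  have ynz: "y j \<noteq> 0" if "j < n" for j using G that by (auto simp: Gen_def y_def)
  have xy: "x i \<noteq> y j" if "i < n" "j < n" for i j using G that
    unfolding Gen_def x_def y_def by (metis add_less_cancel_left less_imp_add_positive not_add_less1 trans_less_add1)
  have tu: "t i \<noteq> u j" if "i < n" "j < n" for i j using G that
    unfolding Gen_def t_def u_def by (metis add_less_cancel_left less_imp_add_positive not_add_less1 trans_less_add1)
  have udist: "u i \<noteq> u j" if "i < n" "j < n" "i \<noteq> j" for i j using G that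
    unfolding Gen_def u_def by auto
  have Fnz: "F i \<noteq> 0" if "i < n" for i using tu that by (auto simp: F_def prod_zero_iff)
  have hval: "hfun \<zeta> (x i) (y j) = x i * y j * (u j - t i) / (x i - y j)" if "i < n" "j < n" for i j
  proof -
    have "(x i - y j) * hfun \<zeta> (x i) (y j) = x i * y j * (u j - t i)"
      using h_T[OF xnz[OF that(1)] ynz[OF that(2)]] by (simp add: t_def u_def x_def y_def)
    thus ?thesis using xy[OF that] by (simp add: field_simps)
  qed
  have N2c: "N2 \<zeta> n z \<in> carrier_mat (n+n) (n+n)" by (simp add: N2_def)
  have "det (N2 \<zeta> n z) = (-1)^(n*n) * det (mat (n+n) (n+n) (\<lambda>(i,j). N2 \<zeta> n z $$ (i, if j < n then j + n else j - n)))"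
    by (rule det_swap_cols[OF N2c])
  also have "mat (n+n) (n+n) (\<lambda>(i,j). N2 \<zeta> n z $$ (i, if j < n then j + n else j - n)) = NN n t u x y"
    by (rule eq_matI) (auto simp: N2_def NN_def x_def y_def t_def u_def add.commute)
  finally have s1: "det (N2 \<zeta> n z) = (-1)^(n*n) * det (NN n t u x y)" .
  have s2: "det (NN n t u x y) = sgnc n * det E"
    unfolding E_def by (rule core) (use udist in auto)
  have "mat n n (\<lambda>(i,j). 1 / hfun \<zeta> (z i) (z (n+j))) =
      mat n n (\<lambda>(i,j). (1 / (x i * F i)) * (- 1 / y j) * ((x i - y j) * (\<Prod>k\<in>{0..<n}-{j}. (t i - u k))))"
  proof (rule eq_matI)
    fix i j assume "i < dim_row (mat n n (\<lambda>(i,j). (1 / (x i * F i)) * (- 1 / y j) * ((x i - y j) * (\<Prod>k\<in>{0..<n}-{j}. (t i - u k)))))"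
      "j < dim_col (mat n n (\<lambda>(i,j). (1 / (x i * F i)) * (- 1 / y j) * ((x i - y j) * (\<Prod>k\<in>{0..<n}-{j}. (t i - u k)))))"
    hence ij: "i < n" "j < n" by auto
    have Fi: "F i = (t i - u j) * (\<Prod>k\<in>{0..<n}-{j}. (t i - u k))"
      unfolding F_def using ij by (subst prod.remove[of _ j]) auto
    have "1 / hfun \<zeta> (z i) (z (n+j)) = (x i - y j) / (x i * y j * (u j - t i))"
      using hval[OF ij] by (simp add: x_def y_def)
    also have "\<dots> = (1 / (x i * F i)) * (- 1 / y j) * ((x i - y j) * (\<Prod>k\<in>{0..<n}-{j}. (t i - u k)))"
    proof -
      have pnz: "(\<Prod>k\<in>{0..<n}-{j}. (t i - u k)) \<noteq> 0" using Fnz[OF ij(1)] Fi by auto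
      have a: "t i - u j \<noteq> 0" "u j - t i \<noteq> 0" "x i - y j \<noteq> 0" using tu[OF ij] xy[OF ij] by auto
      show ?thesis unfolding Fi using pnz a xnz[OF ij(1)] ynz[OF ij(2)]
        by (simp add: field_simps)
    qed
    finally show "mat n n (\<lambda>(i,j). 1 / hfun \<zeta> (z i) (z (n+j))) $$ (i,j) =
      mat n n (\<lambda>(i,j). (1 / (x i * F i)) * (- 1 / y j) * ((x i - y j) * (\<Prod>k\<in>{0..<n}-{j}. (t i - u k)))) $$ (i,j)"
      using ij by simp
  qed auto
  hence s3: "det (mat n n (\<lambda>(i,j). 1 / hfun \<zeta> (z i) (z (n+j)))) =
     (\<Prod>i\<in>{0..<n}. 1 / (x i * F i)) * (\<Prod>j\<in>{0..<n}. - 1 / y j) * det E"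
    unfolding E_def using det_scale[where n=n and f="\<lambda>i. 1 / (x i * F i)" and g="\<lambda>j. - 1 / y j"
        and A="\<lambda>i j. (x i - y j) * (\<Prod>k\<in>{0..<n}-{j}. (t i - u k))"] by simp
  define X where "X = (\<Prod>i\<in>{0..<n}. x i)"
  define Y where "Y = (\<Prod>j\<in>{0..<n}. y j)"
  define Fp where "Fp = (\<Prod>i\<in>{0..<n}. F i)"
  define C where "C = (\<Prod>i\<in>{0..<n}. \<Prod>j\<in>{0..<n}. (x i - y j))"
  define e :: complex where "e = (-1)^(n*n)"
  define s :: complex where "s = sgnc n"
  have ee: "e * e = 1" unfolding e_def by (simp flip: power_add)
  have ss: "s * s = 1" unfolding s_def by (rule sgnc_sq)
  have Xnz: "X \<noteq> 0" unfolding X_def using xnz by (auto simp: prod_zero_iff)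
  have Ynz: "Y \<noteq> 0" unfolding Y_def using ynz by (auto simp: prod_zero_iff)
  have Fpnz: "Fp \<noteq> 0" unfolding Fp_def using Fnz by (auto simp: prod_zero_iff)
  have Cnz: "C \<noteq> 0" unfolding C_def using xy by (auto simp: prod_zero_iff)
  have Vxnz: "Vd n x \<noteq> 0" by (rule Vd_nz) (use G in \<open>auto simp: Gen_def x_def\<close>)
  have Vynz: "Vd n y \<noteq> 0" by (rule Vd_nz) (use G in \<open>auto simp: Gen_def y_def\<close>)
  have p1: "(\<Prod>i\<in>{0..<n}. \<Prod>j\<in>{0..<n}. hfun \<zeta> (z i) (z (n+j))) =
      (\<Prod>i\<in>{0..<n}. \<Prod>j\<in>{0..<n}. x i * y j * (u j - t i) / (x i - y j))"
    using hval by (auto simp: x_def y_def intro!: prod.cong)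
  also have "\<dots> = (\<Prod>i\<in>{0..<n}. \<Prod>j\<in>{0..<n}. x i * y j) * (\<Prod>i\<in>{0..<n}. \<Prod>j\<in>{0..<n}. (u j - t i)) / C"
    unfolding C_def by (simp add: prod_dividef prod.distrib)
  also have "(\<Prod>i\<in>{0..<n}. \<Prod>j\<in>{0..<n}. x i * y j) = X^n * Y^n"
    unfolding X_def Y_def by (simp add: prod.distrib prod_power_distrib)
  also have "(\<Prod>i\<in>{0..<n}. \<Prod>j\<in>{0..<n}. (u j - t i)) = e * Fp"
  proof -
    have "(\<Prod>i\<in>{0..<n}. \<Prod>j\<in>{0..<n}. (u j - t i)) = (\<Prod>i\<in>{0..<n}. \<Prod>j\<in>{0..<n}. (-1) * (t i - u j))"
      by (intro prod.cong refl) (simp add: algebra_simps)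
    also have "\<dots> = e * Fp"
      unfolding e_def Fp_def F_def prod.distrib by (simp add: power_mult)
    finally show ?thesis .
  qed
  finally have A: "(\<Prod>i\<in>{0..<n}. \<Prod>j\<in>{0..<n}. hfun \<zeta> (z i) (z (n+j))) = X^n * Y^n * (e * Fp) / C" .
  have DX: "(\<Prod>i\<in>{0..<n}. \<Prod>j\<in>{Suc i..<n}. (z i - z j)) = s * Vd n x"
    unfolding s_def using DX_Vd[where n=n and x=x] by (simp add: x_def)
  have DY: "(\<Prod>i\<in>{0..<n}. \<Prod>j\<in>{Suc i..<n}. (z (n+i) - z (n+j))) = s * Vd n y"
    unfolding s_def using DX_Vd[where n=n and x=y] by (simp add: y_def)
  have fx: "(\<Prod>i\<in>{0..<n}. 1 / (x i * F i)) = 1 / (X * Fp)"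
    unfolding X_def Fp_def by (simp add: prod_dividef prod.distrib)
  have gy: "(\<Prod>j\<in>{0..<n}. - 1 / y j) = (-1)^n / Y"
    unfolding Y_def by (subst prod_dividef) simp
  have Cr: "(\<Prod>j\<in>{0..<n}. \<Prod>i\<in>{0..<n}. (z (n+j) - z i)) = e * C"
  proof -
    have "(\<Prod>j\<in>{0..<n}. \<Prod>i\<in>{0..<n}. (z (n+j) - z i)) = (\<Prod>i\<in>{0..<n}. \<Prod>j\<in>{0..<n}. (z (n+j) - z i))"
      by (rule prod.swap)
    also have "\<dots> = (\<Prod>i\<in>{0..<n}. \<Prod>j\<in>{0..<n}. (-1) * (x i - y j))"
      by (intro prod.cong refl) (simp add: x_def y_def algebra_simps)
    also have "\<dots> = e * C"
      unfolding e_def C_def prod.distrib by (simp add: power_mult)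
    finally show ?thesis .
  qed
  have xe: "x = z" by (rule ext) (simp add: x_def)
  have ye: "y = (\<lambda>j. z (n+j))" by (rule ext) (simp add: y_def)
  have VV: "det (vdm (n+n) z) = Vd n x * (e * C) * Vd n y"
    using det_vdm[where n="n+n" and u=z] Vd_split[where n=n and z=z] Cr unfolding Vd_def[symmetric]
    by (simp add: xe ye)
  have Pz: "(\<Prod>k\<in>{0..<n+n}. z k ^ (n-1)) = X^(n-1) * Y^(n-1)"
  proof -
    have "(\<Prod>k\<in>{0..<n+n}. z k ^ (n-1)) = (\<Prod>k\<in>{0..<n}. z k ^ (n-1)) * (\<Prod>k\<in>{n..<n+n}. z k ^ (n-1))"
      by (rule prod.atLeastLessThan_concat[symmetric]) auto
    also have "(\<Prod>k\<in>{n..<n+n}. z k ^ (n-1)) = (\<Prod>k\<in>{0..<n}. z (n+k) ^ (n-1))"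
      using prod.shift_bounds_nat_ivl[of "\<lambda>k. z k ^ (n-1)" 0 n n] by (simp add: add.commute)
    finally show ?thesis unfolding X_def Y_def x_def y_def by (simp add: prod_power_distrib)
  qed
  have dN: "det (N2 \<zeta> n z) = e * s * det E" using s1 s2 unfolding e_def s_def by simp
  have Xn: "X^n = X * X^(n-1)" "Y^n = Y * Y^(n-1)" using n1 by (simp_all add: power_eq_if)
  show ?thesis
    unfolding Hz_def A DX DY s3 fx gy VV Pz dN e_def[symmetric] s_def[symmetric] Xn
    using Xnz Ynz Fpnz Cnz Vxnz Vynz ee ss
    by (simp add: field_simps)
qed



lemma signof_nz: "p permutes S \<Longrightarrow> (signof p :: 'a::idom) \<noteq> 0"
  by (simp add: sign_def)

lemma Gen_perm:
  assumes G: "Gen \<zeta> n z" and p: "p permutes {0..<n+n}"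
  shows "Gen \<zeta> n (z \<circ> p)"
proof -
  have pin: "p k < n+n" if "k < n+n" for k using permutes_in_image[OF p] that by auto
  have pinj: "p i \<noteq> p j" if "i \<noteq> j" for i j using permutes_inj[OF p] that by (auto simp: inj_def)
  show ?thesis using G pin pinj unfolding Gen_def by (auto simp: comp_def)
qed

lemma Hz_perm:
  assumes n1: "n \<ge> 1" and G: "Gen \<zeta> n z" and p: "p permutes {0..<n+n}"
  shows "Hz \<zeta> n (z \<circ> p) = Hz \<zeta> n z"
proof -
  have pin: "p k < n+n" if "k < n+n" for k using permutes_in_image[OF p] that by auto
  have G2: "Gen \<zeta> n (z \<circ> p)" by (rule Gen_perm[OF G p])
  have vc: "vdm (n+n) z \<in> carrier_mat (n+n) (n+n)" by (simp add: vdm_def)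
  have nc: "N2 \<zeta> n z \<in> carrier_mat (n+n) (n+n)" by (simp add: N2_def)
  have V: "det (vdm (n+n) (z \<circ> p)) = signof p * det (vdm (n+n) z)"
  proof -
    have "vdm (n+n) (z \<circ> p) = mat (n+n) (n+n) (\<lambda>(i,j). vdm (n+n) z $$ (i, p j))"
      by (rule eq_matI) (auto simp: vdm_def pin)
    thus ?thesis using det_permute_cols[OF vc p] by simp
  qed
  have N: "det (N2 \<zeta> n (z \<circ> p)) = signof p * det (N2 \<zeta> n z)"
  proof -
    have "N2 \<zeta> n (z \<circ> p) = mat (n+n) (n+n) (\<lambda>(i,j). N2 \<zeta> n z $$ (i, p j))"
      by (rule eq_matI) (auto simp: N2_def pin)
    thus ?thesis using det_permute_cols[OF nc p] by simp
  qed
  have P: "(\<Prod>k\<in>{0..<n+n}. (z \<circ> p) k ^ (n-1)) = (\<Prod>k\<in>{0..<n+n}. z k ^ (n-1))"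
    using prod.permute[OF p, of "\<lambda>k. z k ^ (n-1)"] by (simp add: comp_def)
  have Vnz: "det (vdm (n+n) z) \<noteq> 0"
    unfolding det_vdm Vd_def[symmetric] by (rule Vd_nz) (use G in \<open>auto simp: Gen_def\<close>)
  have s: "signof p \<noteq> (0::complex)" by (rule signof_nz[OF p])
  have "Hz \<zeta> n (z \<circ> p) * (signof p * det (vdm (n+n) z)) = Hz \<zeta> n z * (signof p * det (vdm (n+n) z))"
    using main_gen[OF n1 G2] main_gen[OF n1 G] unfolding V N P by (simp add: algebra_simps)
  thus ?thesis using s Vnz by simp
qed

lemma prod_Suc_shift: "(\<Prod>i\<in>{Suc a..b}. f i) = (\<Prod>i\<in>{a..<b}. f (Suc i))"
  by (rule prod.reindex_bij_witness[where i=Suc and j="\<lambda>i. i - 1"]) auto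

lemma prod_add_shift: "(\<Prod>i\<in>{(m::nat)+a..<m+b}. f i) = (\<Prod>i\<in>{a..<b}. f (m+i))"
  using prod.shift_bounds_nat_ivl[where g=f and m=a and k=m and n=b] by (simp add: add.commute)

lemma Hfun_Hz: "Hfun \<zeta> m w = Hz \<zeta> m (\<lambda>k. w (Suc k))"
proof -
  have s1: "{1..m} = {Suc 0..m}" by simp
  have s2: "{m+1..2*m} = {Suc m..m+m}" by auto
  have s3: "{i+1..m} = {Suc i..m}" for i by simp
  have s4: "{i+1..2*m} = {Suc i..m+m}" for i by auto
  have a: "(\<Prod>i\<in>{1..m}. \<Prod>j\<in>{m+1..2*m}. hfun \<zeta> (w i) (w j)) =
      (\<Prod>i\<in>{0..<m}. \<Prod>j\<in>{0..<m}. hfun \<zeta> (w (Suc i)) (w (Suc (m+j))))"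
  proof -
    have "(\<Prod>i\<in>{1..m}. \<Prod>j\<in>{m+1..2*m}. hfun \<zeta> (w i) (w j)) =
        (\<Prod>i\<in>{0..<m}. \<Prod>j\<in>{m+0..<m+m}. hfun \<zeta> (w (Suc i)) (w (Suc j)))"
      unfolding s1 s2 prod_Suc_shift by simp
    also have "\<dots> = (\<Prod>i\<in>{0..<m}. \<Prod>j\<in>{0..<m}. hfun \<zeta> (w (Suc i)) (w (Suc (m+j))))"
      by (simp only: prod_add_shift)
    finally show ?thesis .
  qed
  have b: "(\<Prod>i\<in>{1..m}. \<Prod>j\<in>{i+1..m}. (w i - w j)) =
      (\<Prod>i\<in>{0..<m}. \<Prod>j\<in>{Suc i..<m}. (w (Suc i) - w (Suc j)))"
    unfolding s1 s3 prod_Suc_shift ..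
  have c: "(\<Prod>i\<in>{m+1..2*m}. \<Prod>j\<in>{i+1..2*m}. (w i - w j)) =
      (\<Prod>i\<in>{0..<m}. \<Prod>j\<in>{Suc i..<m}. (w (Suc (m+i)) - w (Suc (m+j))))"
  proof -
    have "(\<Prod>i\<in>{m+1..2*m}. \<Prod>j\<in>{i+1..2*m}. (w i - w j)) =
       (\<Prod>i\<in>{m+0..<m+m}. \<Prod>j\<in>{Suc i..<m+m}. (w (Suc i) - w (Suc j)))"
      unfolding s2 s4 prod_Suc_shift by simp
    also have "\<dots> = (\<Prod>i\<in>{0..<m}. \<Prod>j\<in>{m + Suc i..<m+m}. (w (Suc (m+i)) - w (Suc j)))"
      by (simp only: prod_add_shift add_Suc_right)
    also have "\<dots> = (\<Prod>i\<in>{0..<m}. \<Prod>j\<in>{Suc i..<m}. (w (Suc (m+i)) - w (Suc (m+j))))"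
      by (simp only: prod_add_shift)
    finally show ?thesis .
  qed
  show ?thesis unfolding Hfun_def Hz_def a b c by simp
qed



lemma Hfun_expand: "Hfun \<zeta> m w =
   (\<Prod>i\<in>{1..m}. \<Prod>j\<in>{m+1..2*m}. hfun \<zeta> (w i) (w j))
     / ((\<Prod>i\<in>{1..m}. \<Prod>j\<in>{i+1..m}. (w i - w j))
        * (\<Prod>i\<in>{m+1..2*m}. \<Prod>j\<in>{i+1..2*m}. (w i - w j)))
     * (\<Sum>p\<in>{p. p permutes {0..<m}}. signof p * (\<Prod>i\<in>{0..<m}. 1 / hfun \<zeta> (w (i+1)) (w (m + p i + 1))))"
proof -
  have "det (mat m m (\<lambda>(i, j). 1 / hfun \<zeta> (w (i + 1)) (w (m + j + 1)))) =
    (\<Sum>p\<in>{p. p permutes {0..<m}}. signof p * (\<Prod>i\<in>{0..<m}. 1 / hfun \<zeta> (w (i+1)) (w (m + p i + 1))))"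
    by (subst det_def'[of _ m]) (auto intro!: sum.cong prod.cong simp: permutes_in_image)
  thus ?thesis unfolding Hfun_def by simp
qed

lemma hfun_cont: "isCont (\<lambda>t. hfun \<zeta> (a + t * b) (c + t * d)) 0"
  unfolding hfun_def by (intro continuous_intros)

lemma Hfun_cont:
  assumes H: "H_defined \<zeta> m w"
  shows "((\<lambda>t. Hfun \<zeta> m (\<lambda>k. w k + t * v k)) \<longlongrightarrow> Hfun \<zeta> m w) (at 0)"
proof -
  let ?w = "\<lambda>t k. w k + t * v k"
  have c1: "isCont (\<lambda>t. \<Prod>i\<in>{1..m}. \<Prod>j\<in>{m+1..2*m}. hfun \<zeta> (?w t i) (?w t j)) 0"
    by (intro continuous_prod hfun_cont)
  have c2: "isCont (\<lambda>t. (\<Prod>i\<in>{1..m}. \<Prod>j\<in>{i+1..m}. (?w t i - ?w t j))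
        * (\<Prod>i\<in>{m+1..2*m}. \<Prod>j\<in>{i+1..2*m}. (?w t i - ?w t j))) 0"
    by (intro continuous_intros)
  have nz2: "(\<Prod>i\<in>{1..m}. \<Prod>j\<in>{i+1..m}. (?w 0 i - ?w 0 j))
        * (\<Prod>i\<in>{m+1..2*m}. \<Prod>j\<in>{i+1..2*m}. (?w 0 i - ?w 0 j)) \<noteq> 0"
    using H unfolding H_defined_def by (auto simp: prod_zero_iff)
  have c3: "isCont (\<lambda>t. \<Sum>p\<in>{p. p permutes {0..<m}}. signof p * (\<Prod>i\<in>{0..<m}. 1 / hfun \<zeta> (?w t (i+1)) (?w t (m + p i + 1)))) 0"
  proof (intro isCont_sum ballI continuous_intros isCont_divide hfun_cont)
    fix p i assume p: "p \<in> {p. p permutes {0..<m}}" and i: "i \<in> {0..<m}"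
    have "p i < m" using p i permutes_in_image by fastforce
    thus "hfun \<zeta> (?w 0 (i+1)) (?w 0 (m + p i + 1)) \<noteq> 0"
      using H i unfolding H_defined_def by auto
  qed
  have "isCont (\<lambda>t. Hfun \<zeta> m (?w t)) 0"
    unfolding Hfun_expand by (intro isCont_mult isCont_divide c1 c2 c3 nz2)
  hence "((\<lambda>t. Hfun \<zeta> m (?w t)) \<longlongrightarrow> Hfun \<zeta> m (?w 0)) (at 0)"
    by (simp add: isCont_def)
  thus ?thesis by simp
qed



lemma ev_poly:
  fixes p :: "complex poly"
  assumes "p \<noteq> 0"
  shows "eventually (\<lambda>t. poly p t \<noteq> 0) (at 0)"
proof -
  have fin: "finite {x. poly p x = 0}" by (rule poly_roots_finite[OF assms])
  have "eventually (\<lambda>t. \<forall>s\<in>{x. poly p x = 0}. t \<noteq> s) (at 0)"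
    by (rule eventually_ball_finite[OF fin]) (auto intro: eventually_neq_at_within)
  thus ?thesis by (rule eventually_mono) auto
qed

lemma ev_lin:
  fixes a b :: complex
  assumes "b \<noteq> 0"
  shows "eventually (\<lambda>t. a + t * b \<noteq> 0) (at 0)"
proof -
  have "[:a, b:] \<noteq> 0" using assms by auto
  from ev_poly[OF this] show ?thesis by (simp add: algebra_simps)
qed

lemma hfun_poly:
  "hfun \<zeta> (\<alpha> + \<tau> * a) (\<beta> + \<tau> * b) =
   poly [: 1 - (3+\<zeta>^2) * \<alpha> * \<beta> + (1-\<zeta>^2) * \<alpha> * \<beta> * (\<alpha> + \<beta>),
          - (3+\<zeta>^2) * (\<alpha> * b + \<beta> * a) + (1-\<zeta>^2) * (\<alpha> * \<beta> * (a + b) + (\<alpha> * b + \<beta> * a) * (\<alpha> + \<beta>)),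
          - (3+\<zeta>^2) * a * b + (1-\<zeta>^2) * ((\<alpha> * b + \<beta> * a) * (a + b) + a * b * (\<alpha> + \<beta>)),
          (1-\<zeta>^2) * a * b * (a + b) :] \<tau>"
  by (simp add: hfun_def algebra_simps power2_eq_square)

lemma ev_hfun:
  fixes a b :: complex
  assumes "a \<noteq> 0" "b \<noteq> 0" "a + b \<noteq> 0"
  shows "eventually (\<lambda>t. hfun \<zeta> (\<alpha> + t * a) (\<beta> + t * b) \<noteq> 0) (at 0)"
proof -
  let ?p = "[: 1 - (3+\<zeta>^2) * \<alpha> * \<beta> + (1-\<zeta>^2) * \<alpha> * \<beta> * (\<alpha> + \<beta>),
          - (3+\<zeta>^2) * (\<alpha> * b + \<beta> * a) + (1-\<zeta>^2) * (\<alpha> * \<beta> * (a + b) + (\<alpha> * b + \<beta> * a) * (\<alpha> + \<beta>)),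
          - (3+\<zeta>^2) * a * b + (1-\<zeta>^2) * ((\<alpha> * b + \<beta> * a) * (a + b) + a * b * (\<alpha> + \<beta>)),
          (1-\<zeta>^2) * a * b * (a + b) :]"
  have "?p \<noteq> 0"
  proof (cases "1 - \<zeta>^2 = 0")
    case True
    hence "\<zeta>^2 = 1" by simp
    hence "coeff ?p 2 = -4 * a * b" using True by (simp add: numeral_eq_Suc)
    hence "coeff ?p 2 \<noteq> 0" using assms by simp
    thus ?thesis by auto
  next
    case False
    have "coeff ?p 3 = (1-\<zeta>^2) * a * b * (a + b)" by (simp add: numeral_eq_Suc)
    hence "coeff ?p 3 \<noteq> 0" using assms False by simp
    thus ?thesis by auto
  qed
  from ev_poly[OF this] show ?thesis by (simp only: hfun_poly)
qed

lemma Tf_ne: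
  assumes "a \<noteq> 0" "b \<noteq> 0" "a \<noteq> b" "hfun \<zeta> a b \<noteq> 0"
  shows "Tf \<zeta> a \<noteq> Tf \<zeta> b"
proof
  assume "Tf \<zeta> a = Tf \<zeta> b"
  hence "(a - b) * hfun \<zeta> a b = 0" using h_T[OF assms(1,2)] by simp
  thus False using assms by simp
qed

lemma ev_Gen:
  "eventually (\<lambda>t. Gen \<zeta> n (\<lambda>k. w (Suc k) + t * of_nat (Suc k))) (at 0)"
proof -
  let ?z = "\<lambda>t k. w (Suc k) + t * of_nat (Suc k)"
  have e1: "eventually (\<lambda>t. \<forall>k\<in>{0..<n+n}. ?z t k \<noteq> 0) (at 0)"
    by (rule eventually_ball_finite) (auto intro!: ev_lin simp del: of_nat_Suc)
  have e2: "eventually (\<lambda>t. \<forall>(i,j)\<in>{0..<n+n} \<times> {0..<n+n}. i \<noteq> j \<longrightarrow> ?z t i \<noteq> ?z t j) (at 0)"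
  proof (rule eventually_ball_finite)
    show "\<forall>ij\<in>{0..<n+n} \<times> {0..<n+n}. eventually (\<lambda>t. case ij of (i,j) \<Rightarrow> i \<noteq> j \<longrightarrow> ?z t i \<noteq> ?z t j) (at 0)"
    proof (clarify)
      fix i j :: nat
      have "eventually (\<lambda>t. i \<noteq> j \<longrightarrow> (w (Suc i) - w (Suc j)) + t * (of_nat (Suc i) - of_nat (Suc j)) \<noteq> 0) (at 0)"
      proof (cases "i = j")
        case False
        hence "(of_nat (Suc i) - of_nat (Suc j) :: complex) \<noteq> 0" by simp
        from ev_lin[where a="w (Suc i) - w (Suc j)", OF this] show ?thesis by (rule eventually_mono) simp
      qed simp
      thus "eventually (\<lambda>t. i \<noteq> j \<longrightarrow> ?z t i \<noteq> ?z t j) (at 0)"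
        by (rule eventually_mono) (auto simp: algebra_simps)
    qed
  qed simp
  have e3: "eventually (\<lambda>t. \<forall>(i,j)\<in>{0..<n+n} \<times> {0..<n+n}. hfun \<zeta> (?z t i) (?z t j) \<noteq> 0) (at 0)"
  proof (rule eventually_ball_finite)
    show "\<forall>ij\<in>{0..<n+n} \<times> {0..<n+n}. eventually (\<lambda>t. case ij of (i,j) \<Rightarrow> hfun \<zeta> (?z t i) (?z t j) \<noteq> 0) (at 0)"
    proof (clarify)
      fix i j :: nat
      have "(of_nat (Suc i) :: complex) + of_nat (Suc j) \<noteq> 0"
        by (metis of_nat_add of_nat_eq_0_iff add_is_0 nat.distinct(1))
      thus "eventually (\<lambda>t. hfun \<zeta> (?z t i) (?z t j) \<noteq> 0) (at 0)"
        by (intro ev_hfun) (auto simp del: of_nat_Suc)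
    qed
  qed simp
  show ?thesis
    using e1 e2 e3
  proof (eventually_elim)
    case (elim t)
    show ?case unfolding Gen_def
    proof (intro conjI allI impI)
      fix k assume "k < n+n" thus "?z t k \<noteq> 0" using elim by auto
    next
      fix i j assume ij: "i < n+n" "j < n+n" "i \<noteq> j"
      show "?z t i \<noteq> ?z t j" using elim ij by auto
      show "Tf \<zeta> (?z t i) \<noteq> Tf \<zeta> (?z t j)"
        by (rule Tf_ne) (use elim ij in auto)
    qed
  qed
qed



lemma perm_shift:
  assumes s: "\<sigma> permutes {1..2*m}"
  shows "(\<lambda>k. \<sigma> (Suc k) - 1) permutes {0..<m+m}" and "\<And>k. Suc (\<sigma> (Suc k) - 1) = \<sigma> (Suc k)"
proof -
  have fix_out: "\<And>x. x \<notin> {1..2*m} \<Longrightarrow> \<sigma> x = x" and ex1: "\<And>y. \<exists>!x. \<sigma> x = y"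
    using s unfolding permutes_def by blast+
  have pos: "\<sigma> (Suc k) \<ge> 1" for k
  proof (cases "Suc k \<in> {1..2*m}")
    case True thus ?thesis using permutes_in_image[OF s] by auto
  next
    case False thus ?thesis using fix_out by auto
  qed
  show suc: "\<And>k. Suc (\<sigma> (Suc k) - 1) = \<sigma> (Suc k)"
  proof -
    fix k have "\<sigma> (Suc k) \<ge> 1" by (rule pos)
    thus "Suc (\<sigma> (Suc k) - 1) = \<sigma> (Suc k)" by arith
  qed
  have s0: "\<sigma> 0 = 0" using fix_out by auto
  show "(\<lambda>k. \<sigma> (Suc k) - 1) permutes {0..<m+m}"
    unfolding permutes_def
  proof (intro conjI allI impI)
    fix x assume "x \<notin> {0..<m+m}"
    hence "Suc x \<notin> {1..2*m}" by auto
    thus "\<sigma> (Suc x) - 1 = x" using fix_out by auto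
  next
    fix y
    obtain a where a: "\<sigma> a = Suc y" using ex1 by blast
    have "a \<noteq> 0" using a s0 by (metis nat.distinct(1))
    then obtain x where x: "a = Suc x" by (cases a) auto
    show "\<exists>!x. \<sigma> (Suc x) - 1 = y"
    proof (rule ex1I[of _ x])
      show "\<sigma> (Suc x) - 1 = y" using a x by simp
    next
      fix x' assume "\<sigma> (Suc x') - 1 = y"
      hence "\<sigma> (Suc x') = Suc y" using suc[of x'] by simp
      hence "Suc x' = a" using a ex1[of "Suc y"] by blast
      thus "x' = x" using x by simp
    qed
  qed
qed

theorem mainTheorem2:
  fixes \<zeta> :: complex and m :: nat and w :: "nat \<Rightarrow> complex" and \<sigma> :: "nat \<Rightarrow> nat"
  assumes "m \<ge> 1"
    and "\<sigma> permutes {1..2*m}"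
    and "H_defined \<zeta> m w"
    and "H_defined \<zeta> m (w \<circ> \<sigma>)"
  shows "Hfun \<zeta> m (w \<circ> \<sigma>) = Hfun \<zeta> m w"
proof -
  define v :: "nat \<Rightarrow> complex" where "v k = of_nat k" for k
  define wt where "wt t k = w k + t * v k" for t k
  define \<pi> where "\<pi> k = \<sigma> (Suc k) - 1" for k
  have \<pi>: "\<pi> permutes {0..<m+m}" unfolding \<pi>_def by (rule perm_shift(1)[OF assms(2)])
  have suc: "Suc (\<pi> k) = \<sigma> (Suc k)" for k unfolding \<pi>_def by (rule perm_shift(2)[OF assms(2)])
  have lim1: "((\<lambda>t. Hfun \<zeta> m (wt t)) \<longlongrightarrow> Hfun \<zeta> m w) (at 0)"
    unfolding wt_def by (rule Hfun_cont[OF assms(3)])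
  have lim2: "((\<lambda>t. Hfun \<zeta> m (wt t \<circ> \<sigma>)) \<longlongrightarrow> Hfun \<zeta> m (w \<circ> \<sigma>)) (at 0)"
    using Hfun_cont[OF assms(4), of "v \<circ> \<sigma>"] by (simp add: wt_def comp_def)
  have ev: "eventually (\<lambda>t. Gen \<zeta> m (\<lambda>k. wt t (Suc k))) (at 0)"
    using ev_Gen[of \<zeta> m w] by (simp add: wt_def v_def)
  have evq: "eventually (\<lambda>t. Hfun \<zeta> m (wt t \<circ> \<sigma>) = Hfun \<zeta> m (wt t)) (at 0)"
    using ev
  proof (rule eventually_mono)
    fix t assume G: "Gen \<zeta> m (\<lambda>k. wt t (Suc k))"
    have "(\<lambda>k. (wt t \<circ> \<sigma>) (Suc k)) = (\<lambda>k. wt t (Suc k)) \<circ> \<pi>"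
      by (rule ext) (simp add: suc)
    hence "Hfun \<zeta> m (wt t \<circ> \<sigma>) = Hz \<zeta> m ((\<lambda>k. wt t (Suc k)) \<circ> \<pi>)"
      by (simp add: Hfun_Hz)
    also have "\<dots> = Hz \<zeta> m (\<lambda>k. wt t (Suc k))" by (rule Hz_perm[OF assms(1) G \<pi>])
    also have "\<dots> = Hfun \<zeta> m (wt t)" by (simp add: Hfun_Hz)
    finally show "Hfun \<zeta> m (wt t \<circ> \<sigma>) = Hfun \<zeta> m (wt t)" .
  qed
  have evq': "eventually (\<lambda>t. Hfun \<zeta> m (wt t) = Hfun \<zeta> m (wt t \<circ> \<sigma>)) (at 0)"
    by (rule eventually_mono[OF evq]) simp
  have lim3: "((\<lambda>t. Hfun \<zeta> m (wt t \<circ> \<sigma>)) \<longlongrightarrow> Hfun \<zeta> m w) (at 0)"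
    by (rule Lim_transform_eventually[OF lim1 evq'])
  show ?thesis by (rule tendsto_unique[OF at_neq_bot lim2 lim3])
qed


end
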